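(* (a) Let $n\ge 7$ and let $TL_n(a,a-1,1)$ be a 6-valent first-kind Frobenius circulant with cyclic kernel, where $n\equiv 1 \pmod 6$ and $a$ is a solution of $x^2-x+1\equiv 0 \pmod n$. Then $TL_n(a,a-1,1)$ is isomorphic to $EJ_\alpha$ for some $\alpha=c+d\rho\in\mathbb{Z}[\rho]$ with $\gcd(c,d)=1$. Moreover, letting $k$ be the integer defined by $a^2-a+1=kn$, one has $\alpha=(rn+m)+(sn-ma)\rho$, or $\alpha=(rn+m)+(sn+m(a-1))\rho$, or $\alpha=(rn+ma)+(sn-m(a-1))\rho$, where $(m,r,s)$ is an integer solution of, respectively, $$km^2-[(a-2)r+(2a-1)s]m+(r^2+rs+s^2)n=1,$$ $$km^2+[(a+1)r+(2a-1)s]m+(r^2+rs+s^2)n=1,$$ $$km^2+[(a+1)r-(a-2)s]m+(r^2+rs+s^2)n=1.$$ (b) Let $\alpha=c+d\rho\in\mathbb{Z}[\rho]$ with $N(\alpha)\ge 7$ and $\gcd(c,d)=1$. Then $EJ_\alpha$ is isomorphic to a 6-valent first-kind Frobenius circulant with cyclic kernel if and only if $N(\alpha)\equiv 1 \pmod 6$.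
   Context: $\rho=(1+\sqrt{-3})/2$, $\mathbb{Z}[\rho]=\{x+y\rho: x,y\in\mathbb{Z}\}$ is the ring of Eisenstein-Jacobi integers with norm $N(x+y\rho)=x^2+xy+y^2$. For $0\ne\alpha\in\mathbb{Z}[\rho]$ with $N(\alpha)\ge 7$, the Eisenstein-Jacobi graph $EJ_\alpha$ is the Cayley graph on the additive group of $\mathbb{Z}[\rho]/(\alpha)$ with connection set $\{\pm[1]_\alpha,\pm[\rho]_\alpha,\pm[\rho^2]_\alpha\}$, i.e. $[\xi]_\alpha,[\eta]_\alpha$ are adjacent iff their difference is one of these six classes. For $n\ge 7$, $\mathbb{Z}_n$ denotes integers mod $n$ with classes $[m]$ and unit group $\mathbb{Z}_n^*$ acting by multiplication; $\mathrm{Cay}(K,S)$ is the Cayley graph ($x\sim y$ iff $xy^{-1}\in S$); $TL_n(a,b,c)=\mathrm{Cay}(\mathbb{Z}_n,\{\pm[a],\pm[b],\pm[c]\})$ when $a,b,c,n-a,n-b,n-c$ are pairwise distinct mod $n$. A Frobenius group is a transitive, non-regular permutation group in which only the identity fixes two points; a finite one is $K\rtimes H$ with regular normal kernel $K$ and point stabiliser $H$ acting on $K$ by conjugation. A first-kind $K\rtimes H$-Frobenius graph is $\mathrm{Cay}(K,s^H)$ with $\langle s^H\rangle=K$ and $|H|$ even or $s$ an involution. A 6-valent first-kind Frobenius circulant with cyclic kernel is a 6-valent $TL_n(a,b,c)$ that is a first-kind $\mathbb{Z}_n\rtimes H$-Frobenius graph for some $H\le \mathbb{Z}_n^*$ with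 $\mathbb{Z}_n\rtimes H$ (acting by $[x]^{([y],[m])}=[(x+y)m]$) a Frobenius group with kernel $\mathbb{Z}_n$. *)

theory Defs
  imports Main "HOL-Number_Theory.Cong"
begin

definition graph_iso :: "('a set \<times> ('a \<Rightarrow> 'a \<Rightarrow> bool)) \<Rightarrow> ('b set \<times> ('b \<Rightarrow> 'b \<Rightarrow> bool)) \<Rightarrow> bool" where
  "graph_iso G1 G2 \<longleftrightarrow> (\<exists>f. bij_betw f (fst G1) (fst G2) \<and>
     (\<forall>x\<in>fst G1. \<forall>y\<in>fst G1. snd G1 x y \<longleftrightarrow> snd G2 (f x) (f y)))"

section \<open>Eisenstein-Jacobi integers: the pair (x,y) stands for x + y*rho, rho^2 = rho - 1\<close>

definition ej_add :: "int \<times> int \<Rightarrow> int \<times> int \<Rightarrow> int \<times> int" where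
  "ej_add p q = (fst p + fst q, snd p + snd q)"

definition ej_sub :: "int \<times> int \<Rightarrow> int \<times> int \<Rightarrow> int \<times> int" where
  "ej_sub p q = (fst p - fst q, snd p - snd q)"

definition ej_mult :: "int \<times> int \<Rightarrow> int \<times> int \<Rightarrow> int \<times> int" where
  "ej_mult p q = (fst p * fst q - snd p * snd q,
                  fst p * snd q + snd p * fst q + snd p * snd q)"

definition ej_norm :: "int \<times> int \<Rightarrow> int" where
  "ej_norm p = (fst p)^2 + fst p * snd p + (snd p)^2"

definition ej_cong :: "int \<times> int \<Rightarrow> int \<times> int \<Rightarrow> int \<times> int \<Rightarrow> bool" where
  "ej_cong \<alpha> \<xi> \<eta> \<longleftrightarrow> (\<exists>\<gamma>. ej_sub \<xi> \<eta> = ej_mult \<alpha> \<gamma>)"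

text \<open>the six classes +-1, +-rho, +-rho^2 (rho^2 = -1 + rho)\<close>
definition ej_conn :: "(int \<times> int) set" where
  "ej_conn = {(1,0), (-1,0), (0,1), (0,-1), (-1,1), (1,-1)}"

definition EJ :: "int \<times> int \<Rightarrow> (int \<times> int) set set \<times> ((int \<times> int) set \<Rightarrow> (int \<times> int) set \<Rightarrow> bool)" where
  "EJ \<alpha> = (UNIV // {(\<xi>, \<eta>). ej_cong \<alpha> \<xi> \<eta>},
            (\<lambda>X Y. \<exists>\<xi>\<in>X. \<exists>\<eta>\<in>Y. \<exists>u\<in>ej_conn. ej_cong \<alpha> (ej_sub \<xi> \<eta>) u))"

definition cay_Zn :: "int \<Rightarrow> int set \<Rightarrow> int set \<times> (int \<Rightarrow> int \<Rightarrow> bool)" where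
  "cay_Zn n S = ({0..<n}, (\<lambda>x y. (x - y) mod n \<in> S))"

definition tl_conn :: "int \<Rightarrow> int \<Rightarrow> int \<Rightarrow> int \<Rightarrow> int set" where
  "tl_conn n a b c = {a mod n, (-a) mod n, b mod n, (-b) mod n, c mod n, (-c) mod n}"

definition TL :: "int \<Rightarrow> int \<Rightarrow> int \<Rightarrow> int \<Rightarrow> int set \<times> (int \<Rightarrow> int \<Rightarrow> bool)" where
  "TL n a b c = cay_Zn n (tl_conn n a b c)"

definition tl_6valent :: "int \<Rightarrow> int \<Rightarrow> int \<Rightarrow> int \<Rightarrow> bool" where
  "tl_6valent n a b c \<longleftrightarrow> distinct [a mod n, b mod n, c mod n, (n - a) mod n, (n - b) mod n, (n - c) mod n]"

definition frobenius_group :: "'a set \<Rightarrow> ('a \<Rightarrow> 'a) set \<Rightarrow> bool" where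
  "frobenius_group X G \<longleftrightarrow>
     (\<forall>g\<in>G. bij_betw g X X) \<and>
     (\<forall>x\<in>X. \<forall>y\<in>X. \<exists>g\<in>G. g x = y) \<and>
     (\<exists>g\<in>G. \<exists>x\<in>X. g x = x \<and> (\<exists>z\<in>X. g z \<noteq> z)) \<and>
     (\<forall>g\<in>G. (\<exists>x\<in>X. \<exists>y\<in>X. x \<noteq> y \<and> g x = x \<and> g y = y) \<longrightarrow> (\<forall>z\<in>X. g z = z))"

definition frobenius_kernel :: "'a set \<Rightarrow> ('a \<Rightarrow> 'a) set \<Rightarrow> ('a \<Rightarrow> 'a) set" where
  "frobenius_kernel X G = {g\<in>G. (\<forall>x\<in>X. g x = x) \<or> (\<forall>x\<in>X. g x \<noteq> x)}"

definition units_subgroup :: "int \<Rightarrow> int set \<Rightarrow> bool" where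
  "units_subgroup n H \<longleftrightarrow> H \<subseteq> {0..<n} \<and> (\<forall>h\<in>H. coprime h n) \<and> 1 \<in> H \<and>
     (\<forall>h\<in>H. \<forall>h'\<in>H. (h * h') mod n \<in> H) \<and> (\<forall>h\<in>H. \<exists>h'\<in>H. (h * h') mod n = 1)"

text \<open>Z_n semidirect H acting by [x]^([y],[m]) = [(x+y)m]\<close>
definition sdp_act :: "int \<Rightarrow> int \<Rightarrow> int \<Rightarrow> int \<Rightarrow> int" where
  "sdp_act n y m = (\<lambda>x. ((x + y) * m) mod n)"

definition sdp_group :: "int \<Rightarrow> int set \<Rightarrow> (int \<Rightarrow> int) set" where
  "sdp_group n H = {sdp_act n y m | y m. y \<in> {0..<n} \<and> m \<in> H}"

definition zn_translations :: "int \<Rightarrow> (int \<Rightarrow> int) set" where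
  "zn_translations n = {sdp_act n y 1 | y. y \<in> {0..<n}}"

inductive_set Zn_gen :: "int \<Rightarrow> int set \<Rightarrow> int set" for n T where
  zero: "0 \<in> Zn_gen n T"
| gen: "t \<in> T \<Longrightarrow> t mod n \<in> Zn_gen n T"
| add: "x \<in> Zn_gen n T \<Longrightarrow> y \<in> Zn_gen n T \<Longrightarrow> (x + y) mod n \<in> Zn_gen n T"
| neg: "x \<in> Zn_gen n T \<Longrightarrow> (- x) mod n \<in> Zn_gen n T"

definition first_kind_frobenius_conn :: "int \<Rightarrow> int set \<Rightarrow> int set \<Rightarrow> bool" where
  "first_kind_frobenius_conn n H S \<longleftrightarrow>
     (\<exists>s\<in>{0..<n}. S = {(s * h) mod n | h. h \<in> H} \<and>
        Zn_gen n {(s * h) mod n | h. h \<in> H} = {0..<n} \<and>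
        (even (card H) \<or> (s \<noteq> 0 \<and> (2 * s) mod n = 0)))"

definition frobenius_circulant :: "int \<Rightarrow> int \<Rightarrow> int \<Rightarrow> int \<Rightarrow> bool" where
  "frobenius_circulant n a b c \<longleftrightarrow> n \<ge> 7 \<and> tl_6valent n a b c \<and>
     (\<exists>H. units_subgroup n H \<and>
          frobenius_group {0..<n} (sdp_group n H) \<and>
          frobenius_kernel {0..<n} (sdp_group n H) = zn_translations n \<and>
          first_kind_frobenius_conn n H (tl_conn n a b c))"

end

theory Submission
  imports Defs "HOL-Library.Discrete_Functions"
begin



definition phi :: "int \<Rightarrow> int \<times> int \<Rightarrow> int" where
  "phi a p = fst p + snd p * a"

lemma phi_sub: "phi a (ej_sub p q) = phi a p - phi a q"
  by (simp add: phi_def ej_sub_def algebra_simps)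

lemma phi_mult:
  assumes "n dvd a^2 - a + 1"
  shows "n dvd phi a (ej_mult p q) - phi a p * phi a q"
proof -
  have "phi a (ej_mult p q) - phi a p * phi a q = - (snd p * snd q) * (a^2 - a + 1)"
    by (simp add: phi_def ej_mult_def algebra_simps power2_eq_square)
  then show ?thesis using assms by simp
qed

lemma cong_iff:
  assumes N: "ej_norm (c,d) = N" "N > 0" and h1: "N dvd c + d*a" and h2: "N dvd a^2 - a + 1"
  shows "ej_cong (c,d) \<xi> \<eta> \<longleftrightarrow> N dvd phi a \<xi> - phi a \<eta>"
proof
  assume "ej_cong (c,d) \<xi> \<eta>"
  then obtain \<gamma> where g: "ej_sub \<xi> \<eta> = ej_mult (c,d) \<gamma>" by (auto simp: ej_cong_def)
  define u where "u = phi a (ej_mult (c,d) \<gamma>)"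
  define v where "v = phi a (c,d) * phi a \<gamma>"
  have 1: "N dvd u - v" unfolding u_def v_def by (rule phi_mult[OF h2])
  have 2: "N dvd v" using h1 unfolding v_def by (simp add: phi_def mult.commute)
  have "u = (u - v) + v" by simp
  hence "N dvd u" using 1 2 by (metis dvd_add)
  then show "N dvd phi a \<xi> - phi a \<eta>" using g phi_sub u_def by metis
next
  assume A: "N dvd phi a \<xi> - phi a \<eta>"
  obtain x y where xy: "ej_sub \<xi> \<eta> = (x,y)" by fastforce
  have "phi a \<xi> - phi a \<eta> = x + y*a" using xy phi_sub[of a \<xi> \<eta>] by (simp add: phi_def)
  hence dx: "N dvd x + y*a" using A by simp
  define P where "P = x*(c+d) + y*d"
  define Q where "Q = y*c - x*d"
  have "Q = y*(c + d*a) - d*(x + y*a)" by (simp add: Q_def algebra_simps)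
  hence "N dvd Q" using h1 dx by simp
  then obtain g2 where g2: "Q = N*g2" by blast
  have "P = (x+y*a)*(c+d) - y*a*(c+d*a) + y*d*(a^2-a+1)"
    by (simp add: P_def algebra_simps power2_eq_square)
  hence "N dvd P" using h1 h2 dx by simp
  then obtain g1 where g1: "P = N*g1" by blast
  have i1: "c*P - d*Q = x*(c^2+c*d+d^2)"
    by (simp add: P_def Q_def algebra_simps power2_eq_square)
  have i2: "c*Q + d*P + d*Q = y*(c^2+c*d+d^2)"
    by (simp add: P_def Q_def algebra_simps power2_eq_square)
  have nn: "c^2+c*d+d^2 = N" using N(1) by (simp add: ej_norm_def)
  have "N*(c*g1 - d*g2) = c*P - d*Q" using g1 g2 by (simp add: algebra_simps)
  also have "\<dots> = N*x" using i1 nn by simp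
  finally have e1: "c*g1 - d*g2 = x" using N(2) by simp
  have "N*(c*g2 + d*g1 + d*g2) = c*Q + d*P + d*Q" using g1 g2 by (simp add: algebra_simps)
  also have "\<dots> = N*y" using i2 nn by simp
  finally have e2: "c*g2 + d*g1 + d*g2 = y" using N(2) by simp
  have "ej_sub \<xi> \<eta> = ej_mult (c,d) (g1,g2)"
    using e1 e2 xy by (simp add: ej_mult_def)
  then show "ej_cong (c,d) \<xi> \<eta>" by (auto simp: ej_cong_def)
qed




lemma class_eq:
  assumes N: "ej_norm (c,d) = N" "N > 0" and h1: "N dvd c + d*a" and h2: "N dvd a^2 - a + 1"
  shows "{(\<xi>, \<eta>). ej_cong (c,d) \<xi> \<eta>} `` {p} = {q. phi a q mod N = phi a p mod N}"
  using cong_iff[OF assms] by (auto simp: mod_eq_dvd_iff dvd_diff_commute)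

lemma iso_TL_EJ:
  assumes N: "ej_norm (c,d) = N" "N > 0" and h1: "N dvd c + d*a" and h2: "N dvd a^2 - a + 1"
  shows "graph_iso (TL N a (a - 1) 1) (EJ (c, d))"
proof -
  define R where "R = {(\<xi>, \<eta>). ej_cong (c,d) \<xi> \<eta>}"
  have cl: "R `` {p} = {q. phi a q mod N = phi a p mod N}" for p
    unfolding R_def by (rule class_eq[OF assms])
  define f where "f x = R `` {(x,0)}" for x :: int
  have fx: "f x = {q. phi a q mod N = x mod N}" for x
    unfolding f_def cl by (simp add: phi_def)
  have inj: "inj_on f {0..<N}"
  proof
    fix x y assume x: "x \<in> {0..<N}" and y: "y \<in> {0..<N}" and e: "f x = f y"
    have "(x,0) \<in> f x" unfolding fx by (simp add: phi_def)
    hence "(x,0) \<in> f y" using e by simp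
    hence "x mod N = y mod N" unfolding fx by (simp add: phi_def)
    thus "x = y" using x y by simp
  qed
  have img: "f ` {0..<N} = UNIV // R"
  proof
    show "f ` {0..<N} \<subseteq> UNIV // R" unfolding f_def by (auto intro: quotientI)
    show "UNIV // R \<subseteq> f ` {0..<N}"
    proof
      fix X assume "X \<in> UNIV // R"
      then obtain p where p: "X = R `` {p}" by (auto elim: quotientE)
      have "X = f (phi a p mod N)" unfolding p cl fx by simp
      moreover have "phi a p mod N \<in> {0..<N}" using N(2) by simp
      ultimately show "X \<in> f ` {0..<N}" by blast
    qed
  qed
  have bij: "bij_betw f {0..<N} (UNIV // R)" using inj img by (simp add: bij_betw_def)
  have conn: "phi a ` ej_conn = {a, -a, a - 1, -(a-1), 1, -1}"
    by (simp add: ej_conn_def phi_def insert_commute)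
  have adj: "snd (TL N a (a - 1) 1) x y \<longleftrightarrow> snd (EJ (c, d)) (f x) (f y)"
    if x: "x \<in> {0..<N}" and y: "y \<in> {0..<N}" for x y
  proof -
    have "snd (TL N a (a - 1) 1) x y \<longleftrightarrow> (x - y) mod N \<in> (\<lambda>t. t mod N) ` {a, -a, a - 1, -(a-1), 1, -1}"
      unfolding TL_def cay_Zn_def tl_conn_def by simp
    also have "\<dots> \<longleftrightarrow> (\<exists>u\<in>ej_conn. (x - y) mod N = phi a u mod N)" unfolding conn[symmetric] by blast
    also have "\<dots> \<longleftrightarrow> snd (EJ (c, d)) (f x) (f y)"
    proof
      assume "\<exists>u\<in>ej_conn. (x - y) mod N = phi a u mod N"
      then obtain u where u: "u \<in> ej_conn" "(x - y) mod N = phi a u mod N" by blast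
      have "(x,0) \<in> f x" "(y,0) \<in> f y" unfolding fx by (simp_all add: phi_def)
      moreover have "ej_cong (c,d) (ej_sub (x,0) (y,0)) u"
        unfolding cong_iff[OF assms] using u(2) by (simp add: phi_sub phi_def mod_eq_dvd_iff ej_sub_def)
      ultimately show "snd (EJ (c, d)) (f x) (f y)" using u(1) unfolding EJ_def by auto
    next
      assume "snd (EJ (c, d)) (f x) (f y)"
      then obtain \<xi> \<eta> u where \<xi>: "\<xi> \<in> f x" and \<eta>: "\<eta> \<in> f y" and u: "u \<in> ej_conn"
        and cg: "ej_cong (c,d) (ej_sub \<xi> \<eta>) u" unfolding EJ_def by auto
      have "N dvd phi a \<xi> - phi a \<eta> - phi a u" using cg unfolding cong_iff[OF assms] by (simp add: phi_sub)
      moreover have "phi a \<xi> mod N = x mod N" "phi a \<eta> mod N = y mod N" using \<xi> \<eta> unfolding fx by auto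
      ultimately have "(x - y) mod N = phi a u mod N"
        by (metis mod_diff_cong mod_eq_dvd_iff)
      thus "\<exists>u\<in>ej_conn. (x - y) mod N = phi a u mod N" using u by blast
    qed
    finally show ?thesis .
  qed
  have v1: "fst (TL N a (a - 1) 1) = {0..<N}" by (simp add: TL_def cay_Zn_def)
  have v2: "fst (EJ (c, d)) = UNIV // R" by (simp add: EJ_def R_def)
  show ?thesis unfolding graph_iso_def v1 v2
    using bij adj by blast
qed

lemma graph_iso_sym:
  assumes "graph_iso G1 G2" shows "graph_iso G2 G1"
proof -
  obtain f where f: "bij_betw f (fst G1) (fst G2)"
    and a: "\<forall>x\<in>fst G1. \<forall>y\<in>fst G1. snd G1 x y \<longleftrightarrow> snd G2 (f x) (f y)"
    using assms unfolding graph_iso_def by blast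
  define g where "g = inv_into (fst G1) f"
  have g: "bij_betw g (fst G2) (fst G1)" unfolding g_def by (rule bij_betw_inv_into[OF f])
  have "\<forall>x\<in>fst G2. \<forall>y\<in>fst G2. snd G2 x y \<longleftrightarrow> snd G1 (g x) (g y)"
  proof (intro ballI)
    fix x y assume x: "x \<in> fst G2" and y: "y \<in> fst G2"
    have gx: "g x \<in> fst G1" "f (g x) = x" using x f g unfolding g_def
      by (auto simp: bij_betw_def f_inv_into_f inv_into_into)
    have gy: "g y \<in> fst G1" "f (g y) = y" using y f g unfolding g_def
      by (auto simp: bij_betw_def f_inv_into_f inv_into_into)
    show "snd G2 x y \<longleftrightarrow> snd G1 (g x) (g y)" using a gx gy by metis
  qed
  thus ?thesis using g unfolding graph_iso_def by blast
qed




lemma norm_ident: "c^2 + c*d + d^2 = (c + d*a)*(c + d - d*a) + d^2*(a^2 - a + 1)" for c d a :: int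
  by (simp add: algebra_simps power2_eq_square)

lemma coprime_from_prod:
  fixes x y u n :: int
  assumes "n dvd x*y - u" "coprime u n" shows "coprime x n"
proof (rule coprimeI)
  fix g assume g: "g dvd x" "g dvd n"
  have "g dvd x*y" using g by simp
  moreover have "g dvd x*y - u" using g assms(1) dvd_trans by blast
  ultimately have "g dvd x*y - (x*y - u)" by (rule dvd_diff)
  hence "g dvd u" by simp
  thus "is_unit g" using g(2) assms(2) coprime_common_divisor by blast
qed

lemma three_dvd_sq: "(3::int) dvd t^2 \<Longrightarrow> 3 dvd t"
proof (rule ccontr)
  assume h: "3 dvd t^2" and nd: "\<not> 3 dvd t"
  define q where "q = t div 3"
  define r where "r = t mod 3"
  have t: "t = 3*q + r" unfolding q_def r_def by simp
  have r: "r = 1 \<or> r = 2" unfolding r_def using nd by presburger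
  have "t^2 = 3*(3*q^2 + 2*q*r) + r^2" unfolding t by (simp add: power2_eq_square algebra_simps)
  hence "3 dvd r^2" using h by (metis dvd_add_right_iff dvd_triv_left)
  thus False using r by auto
qed
lemma nid1: "(u::int)^2 + u*w + w^2 = (u - w)^2 + 3*(u*w)"
  by (simp add: algebra_simps power2_eq_square)

lemma nid2: "w = u + 3*y \<Longrightarrow> 3 * ej_norm (u + y, y) = ej_norm (u,w)"
  by (simp add: ej_norm_def algebra_simps power2_eq_square)

lemma nid3: "ej_mult (u + y, y) (1,1) = (u, u + 3*y)"
  by (simp add: ej_mult_def)

lemma even_norm: "even (u^2 + u*w + w^2) \<Longrightarrow> even u \<and> even w" for u w :: int
  by (auto simp: power2_eq_square)

lemma norm_pos: "ej_norm (u,w) > 0" if "(u,w) \<noteq> (0,0)" for u w :: int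
proof -
  have "4 * ej_norm (u,w) = (2*u+w)^2 + 3*w^2" by (simp add: ej_norm_def algebra_simps power2_eq_square)
  moreover have "(2*u+w)^2 + 3*w^2 > 0"
  proof (cases "w = 0")
    case True thus ?thesis using that by simp
  next
    case False thus ?thesis by (simp add: add_nonneg_pos)
  qed
  ultimately show ?thesis by simp
qed

lemma exists_rep:
  fixes n a :: int
  assumes n: "n > 0" "odd n" "coprime 3 n" and h: "n dvd a^2 - a + 1"
  shows "\<exists>c d. ej_norm (c,d) = n \<and> n dvd c + d*a"
proof -
  define A where "A = floor_sqrt (nat n)"
  define B where "B = int A"
  have "A^2 \<le> nat n" unfolding A_def by simp
  hence "int (A^2) \<le> int (nat n)" by (simp only: of_nat_le_iff)
  hence B2: "B^2 \<le> n" unfolding B_def using n(1) by simp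
  have "nat n < (Suc A)^2" unfolding A_def by (rule Suc_floor_sqrt_power2_gt)
  hence "int (nat n) < int ((Suc A)^2)" by (simp only: of_nat_less_iff)
  hence B2': "n < (B+1)^2" unfolding B_def using n(1) by (simp add: add.commute)
  have B0: "B \<ge> 0" unfolding B_def by simp
  define Box where "Box = {0..B} \<times> {0..B}"
  define g where "g p = (fst p + snd p * a) mod n" for p :: "int \<times> int"
  have cB: "card Box = nat ((B+1)^2)" unfolding Box_def using B0
    by (simp add: card_cartesian_product power2_eq_square nat_mult_distrib)
  have "g ` Box \<subseteq> {0..<n}" unfolding g_def using n(1) by auto
  hence "card (g ` Box) \<le> card {0..<n}" by (rule card_mono[rotated]) simp
  also have "\<dots> = nat n" by simp
  also have "\<dots> < nat ((B+1)^2)" using B2' n(1) zless_nat_conj by auto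
  also have "\<dots> = card Box" using cB by simp
  finally have "\<not> inj_on g Box" using pigeonhole by blast
  then obtain p q where pq: "p \<in> Box" "q \<in> Box" "p \<noteq> q" "g p = g q" unfolding inj_on_def by blast
  define u where "u = fst p - fst q"
  define w where "w = snd p - snd q"
  have uw0: "(u,w) \<noteq> (0,0)" using pq(3) unfolding u_def w_def by (auto simp: prod_eq_iff)
  have dv: "n dvd u + w*a" using pq(4) unfolding g_def u_def w_def
    by (simp add: mod_eq_dvd_iff algebra_simps)
  have ub: "\<bar>u\<bar> \<le> B" "\<bar>w\<bar> \<le> B" using pq(1,2) unfolding Box_def u_def w_def by auto
  define Q where "Q = ej_norm (u,w)"
  have Qp: "Q > 0" unfolding Q_def using norm_pos uw0 by blast
  have "Q = (u + w*a)*(u + w - w*a) + w^2*(a^2 - a + 1)" unfolding Q_def ej_norm_def using norm_ident[of u w a] by simp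
  hence "n dvd Q" using dv h by simp
  then obtain j where j: "Q = n * j" by blast
  have "\<bar>u\<bar>^2 \<le> B^2" using ub(1) by (intro power_mono) auto
  moreover have "\<bar>w\<bar>^2 \<le> B^2" using ub(2) by (intro power_mono) auto
  ultimately have "u^2 \<le> B^2" "w^2 \<le> B^2" by simp_all
  moreover have "u*w \<le> B^2"
  proof -
    have "u*w \<le> \<bar>u\<bar>*\<bar>w\<bar>" using abs_ge_self[of "u*w"] by (simp add: abs_mult)
    also have "\<dots> \<le> B*B" using ub by (simp add: mult_mono)
    finally show ?thesis by (simp add: power2_eq_square)
  qed
  ultimately have "Q \<le> 3*B^2" unfolding Q_def ej_norm_def by simp
  hence "n * j \<le> n * 3" using B2 j by simp
  hence j3: "j \<le> 3" using n(1) by simp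
  have "j > 0" using Qp j n(1) by (simp add: zero_less_mult_iff)
  hence j1: "j \<ge> 1" by simp
  consider "j = 1" | "j = 2" | "j = 3" using j1 j3 by linarith
  then show ?thesis
  proof cases
    case 1 thus ?thesis using j dv Q_def by auto
  next
    case 2
    have "even Q" using j 2 by simp
    hence "even (u^2 + u*w + w^2)" unfolding Q_def ej_norm_def by simp
    hence "even u \<and> even w" by (rule even_norm)
    then obtain u' w' where "u = 2*u'" "w = 2*w'" by blast
    hence "Q = 4 * ej_norm (u',w')" unfolding Q_def ej_norm_def by (simp add: algebra_simps power2_eq_square)
    hence "2 * n = 4 * ej_norm (u',w')" using j 2 by simp
    hence "even n" by presburger
    thus ?thesis using n(2) by simp
  next
    case 3
    have "Q = (u - w)^2 + 3*(u*w)" unfolding Q_def ej_norm_def using nid1 by simp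
    hence "(u - w)^2 = 3 * (n - u*w)" using j 3 by simp
    hence "3 dvd (u - w)^2" by simp
    hence "3 dvd u - w" by (rule three_dvd_sq)
    hence "3 dvd w - u" by (simp add: dvd_diff_commute)
    then obtain y where y: "w - u = 3*y" by blast
    hence wy: "w = u + 3*y" by simp
    define x where "x = u + y"
    have m: "ej_mult (x,y) (1,1) = (u,w)" unfolding x_def wy by (rule nid3)
    have "3 * ej_norm (x,y) = Q" unfolding Q_def x_def by (rule nid2[OF wy])
    hence nn: "ej_norm (x,y) = n" using j 3 by simp
    have "n dvd phi a (ej_mult (x,y) (1,1)) - phi a (x,y) * phi a (1,1)" by (rule phi_mult[OF h])
    moreover have "phi a (ej_mult (x,y) (1,1)) = u + w*a" unfolding m phi_def by simp
    ultimately have "n dvd (u + w*a) - phi a (x,y) * (1 + a)" by (simp add: phi_def)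
    hence "n dvd (u + w*a) - ((u + w*a) - phi a (x,y) * (1 + a))" using dv by (rule dvd_diff[rotated])
    hence "n dvd phi a (x,y) * (1 + a)" by simp
    moreover have "coprime (1 + a) n"
    proof (rule coprime_from_prod[of n _ "2 - a" 3])
      have "(1+a)*(2-a) - 3 = -(a^2 - a + 1)" by (simp add: algebra_simps power2_eq_square)
      thus "n dvd (1+a)*(2-a) - 3" using h by (metis dvd_minus_iff)
      show "coprime 3 n" by (rule n(3))
    qed
    hence "coprime n (1 + a)" by (simp add: coprime_commute)
    ultimately have "n dvd phi a (x,y)" using coprime_dvd_mult_left_iff by blast
    thus ?thesis using nn by (auto simp: phi_def)
  qed
qed

lemma gcd_one:
  fixes c d a n :: int
  assumes N: "ej_norm (c,d) = n" "n > 0" and h1: "n dvd c + d*a" and h2: "n dvd a^2 - a + 1"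
  shows "gcd c d = 1"
proof -
  define g where "g = gcd c d"
  have gpos: "g > 0" unfolding g_def using N by (auto simp: ej_norm_def)
  obtain c' where c': "c = g*c'" unfolding g_def by (meson gcd_dvd1 dvd_def)
  obtain d' where d': "d = g*d'" unfolding g_def by (meson gcd_dvd2 dvd_def)
  define m where "m = ej_norm (c',d')"
  have nm: "n = g^2 * m" using N(1) unfolding m_def ej_norm_def c' d' by (simp add: algebra_simps power2_eq_square)
  have mpos: "m > 0" using nm N(2) gpos by (auto simp: zero_less_mult_iff)
  have "m = (c' + d'*a)*(c' + d' - d'*a) + d'^2*(a^2 - a + 1)"
    unfolding m_def ej_norm_def using norm_ident[of c' d' a] by simp
  hence "g*m = g*((c' + d'*a)*(c' + d' - d'*a) + d'^2*(a^2 - a + 1))" by simp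
  also have "\<dots> = (g*(c' + d'*a))*(c' + d' - d'*a) + g*(d'^2*(a^2 - a + 1))"
    by (simp add: algebra_simps)
  finally have "g*m = (g*(c' + d'*a))*(c' + d' - d'*a) + g*(d'^2*(a^2 - a + 1))" .
  moreover have "g*(c' + d'*a) = c + d*a" using c' d' by (simp add: algebra_simps)
  ultimately have "g*m = (c + d*a)*(c' + d' - d'*a) + g*(d'^2*(a^2 - a + 1))" by simp
  hence "n dvd g*m" using h1 h2 by simp
  hence "g*(g*m) dvd 1*(g*m)" using nm by (simp add: power2_eq_square mult.assoc)
  hence "g dvd 1" using gpos mpos by (subst (asm) dvd_mult_cancel_right) auto
  thus ?thesis using gpos g_def by simp
qed




lemma nmod: "(n - x) mod n = (- x) mod n" for n x :: int
  by (simp add: mod_eq_dvd_iff)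

lemma Zn_gen_dvd:
  assumes "x \<in> Zn_gen n T" "\<forall>t\<in>T. g dvd t" "g dvd n"
  shows "g dvd x"
  using assms by (induction rule: Zn_gen.induct) (auto intro: dvd_mod)

lemma Zn_gen_range:
  assumes "x \<in> Zn_gen n T" "n > 0" shows "x \<in> {0..<n}"
  using assms by (induction rule: Zn_gen.induct) auto

lemma card_tl_conn:
  assumes "tl_6valent n a b e" shows "card (tl_conn n a b e) = 6"
proof -
  have "set [a mod n, b mod n, e mod n, (n - a) mod n, (n - b) mod n, (n - e) mod n] = tl_conn n a b e"
    by (auto simp: tl_conn_def nmod)
  moreover have "distinct [a mod n, b mod n, e mod n, (n - a) mod n, (n - b) mod n, (n - e) mod n]"
    using assms by (simp add: tl_6valent_def)
  ultimately show ?thesis using distinct_card by fastforce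
qed

lemma sdp_mem: "y \<in> {0..<n} \<Longrightarrow> m \<in> H \<Longrightarrow> sdp_act n y m \<in> sdp_group n H"
  unfolding sdp_group_def
  apply (rule CollectI)
  apply (rule exI[of _ y])
  apply (rule exI[of _ m])
  by simp

lemma frob_two_fix:
  assumes "frobenius_group X G" "g \<in> G" "x \<in> X" "y \<in> X" "x \<noteq> y" "g x = x" "g y = y" "z \<in> X"
  shows "g z = z"
proof -
  have "\<forall>g\<in>G. (\<exists>x\<in>X. \<exists>y\<in>X. x \<noteq> y \<and> g x = x \<and> g y = y) \<longrightarrow> (\<forall>z\<in>X. g z = z)"
    using assms(1) unfolding frobenius_group_def by (elim conjE)
  hence "(\<exists>x\<in>X. \<exists>y\<in>X. x \<noteq> y \<and> g x = x \<and> g y = y) \<longrightarrow> (\<forall>z\<in>X. g z = z)"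
    using assms(2) by (rule bspec)
  moreover have "\<exists>x\<in>X. \<exists>y\<in>X. x \<noteq> y \<and> g x = x \<and> g y = y"
    using assms(3-7) by (intro bexI[of _ x] bexI[of _ y]) simp_all
  ultimately have "\<forall>z\<in>X. g z = z" by (rule mp)
  thus ?thesis using assms(8) by (rule bspec)
qed

lemma frob_fix_unit:
  assumes n: "n > 1" and fg: "frobenius_group {0..<n} (sdp_group n H)"
    and H: "units_subgroup n H" and h: "h \<in> H" "h \<noteq> 1"
  shows "coprime (h - 1) n"
proof (rule ccontr)
  assume nc: "\<not> coprime (h - 1) n"
  define g where "g = gcd (h - 1) n"
  have g0: "g \<ge> 0" unfolding g_def by simp
  have "g \<noteq> 0" unfolding g_def using n by simp
  moreover have "g \<noteq> 1" unfolding g_def using nc by (simp add: coprime_iff_gcd_eq_1)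
  ultimately have g2: "g \<ge> 2" using g0 by linarith
  have gd: "g dvd n" "g dvd h - 1" unfolding g_def by simp_all
  then obtain z where z: "n = g * z" by blast
  have "0 < g*z" using z n by simp
  hence zpos: "z > 0" using g2 by (simp add: zero_less_mult_iff)
  have "1*z < g*z" using g2 zpos by (intro mult_strict_right_mono) auto
  hence zlt: "z < n" using z by simp
  obtain t where t: "h - 1 = g * t" using gd(2) by blast
  have hr: "h \<in> {0..<n}" using H h unfolding units_subgroup_def by auto
  let ?f = "sdp_act n 0 h"
  have fG: "?f \<in> sdp_group n H" using h(1) n by (intro sdp_mem) auto
  have f0: "?f 0 = 0" by (simp add: sdp_act_def)
  have "z*h = z + n*t" using z t by (simp add: algebra_simps)
  hence "?f z = (z + n*t) mod n" by (simp add: sdp_act_def)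
  also have "\<dots> = z mod n" by simp
  also have "\<dots> = z" using zpos zlt by simp
  finally have fz: "?f z = z" .
  have "?f 1 = 1"
    by (rule frob_two_fix[OF fg fG, of 0 z]) (use f0 fz zpos zlt n in auto)
  hence "h mod n = 1" by (simp add: sdp_act_def)
  hence "h = 1" using hr by simp
  thus False using h(2) by simp
qed

lemma frob_mod6:
  assumes fc: "frobenius_circulant n a b e"
  shows "n mod 6 = 1"
proof -
  obtain H where n7: "n \<ge> 7" and tv: "tl_6valent n a b e" and H: "units_subgroup n H"
    and fg: "frobenius_group {0..<n} (sdp_group n H)"
    and fk: "first_kind_frobenius_conn n H (tl_conn n a b e)"
    using fc unfolding frobenius_circulant_def by blast
  have n1: "n > 1" using n7 by simp
  obtain s where s: "s \<in> {0..<n}" and S: "tl_conn n a b e = {(s * h) mod n | h. h \<in> H}"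
    and gen: "Zn_gen n {(s * h) mod n | h. h \<in> H} = {0..<n}"
    using fk unfolding first_kind_frobenius_conn_def by blast
  have Hr: "\<And>h. h \<in> H \<Longrightarrow> h \<in> {0..<n}" and Hc: "\<And>h. h \<in> H \<Longrightarrow> coprime h n"
    and H1: "1 \<in> H" and Hm: "\<And>h h'. h \<in> H \<Longrightarrow> h' \<in> H \<Longrightarrow> (h * h') mod n \<in> H"
    and Hi: "\<And>h. h \<in> H \<Longrightarrow> \<exists>h'\<in>H. (h * h') mod n = 1"
    using H unfolding units_subgroup_def by auto
  have cs: "coprime s n"
  proof -
    have "1 \<in> Zn_gen n {(s * h) mod n | h. h \<in> H}" using gen n1 by simp
    moreover have "\<forall>t\<in>{(s * h) mod n | h. h \<in> H}. gcd s n dvd t"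
    proof
      fix t assume "t \<in> {(s * h) mod n | h. h \<in> H}"
      then obtain h where t: "t = (s*h) mod n" by blast
      have "gcd s n dvd s*h" by (simp add: dvd_mult2)
      thus "gcd s n dvd t" unfolding t by (rule dvd_mod) simp
    qed
    ultimately have "gcd s n dvd 1" by (rule Zn_gen_dvd[OF _ _ gcd_dvd2])
    thus ?thesis by (simp add: coprime_iff_gcd_eq_1)
  qed
  have img: "{(s * h) mod n | h. h \<in> H} = (\<lambda>h. (s*h) mod n) ` H" by blast
  have "inj_on (\<lambda>h. (s*h) mod n) H"
  proof
    fix h h' assume hh: "h \<in> H" "h' \<in> H" "(s*h) mod n = (s*h') mod n"
    hence "[s*h = s*h'] (mod n)" by (simp add: cong_def)
    hence "[h = h'] (mod n)" using cs by (simp add: cong_mult_lcancel)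
    thus "h = h'" using Hr[OF hh(1)] Hr[OF hh(2)] by (simp add: cong_def)
  qed
  hence "card H = card ((\<lambda>h. (s*h) mod n) ` H)" by (simp add: card_image)
  also have "\<dots> = card (tl_conn n a b e)" using S img by simp
  also have "\<dots> = 6" using card_tl_conn[OF tv] .
  finally have cH: "card H = 6" .
  define A where "A = {1..<n}"
  define r where "r = {(x,y). x \<in> A \<and> y \<in> A \<and> (\<exists>h\<in>H. y = (x*h) mod n)}"
  have inA: "(x*h) mod n \<in> A" if "x \<in> A" "h \<in> H" for x h
  proof -
    have "\<not> n dvd x" using that(1) unfolding A_def using zdvd_not_zless by auto
    moreover have "coprime n h" using Hc[OF that(2)] by (simp add: coprime_commute)
    ultimately have "\<not> n dvd x*h" using coprime_dvd_mult_left_iff by blast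
    hence m0: "(x*h) mod n \<noteq> 0" by (simp add: dvd_eq_mod_eq_0)
    have "0 < n" using n1 by simp
    thus ?thesis unfolding A_def atLeastLessThan_iff using m0 pos_mod_bound[of n "x*h"] pos_mod_sign[of n "x*h"] by linarith
  qed
  have eq: "equiv A r"
  proof (rule equivI)
    show "refl_on A r" unfolding refl_on_def r_def
    proof (intro conjI subsetI ballI)
      fix x assume x: "x \<in> A"
      hence "x = (x*1) mod n" unfolding A_def by simp
      thus "(x,x) \<in> {(x,y). x \<in> A \<and> y \<in> A \<and> (\<exists>h\<in>H. y = (x*h) mod n)}" using x H1 by blast
    qed
    show "r \<subseteq> A \<times> A" unfolding r_def by blast
    show "sym r" unfolding sym_def
    proof (intro allI impI)
      fix x y assume "(x,y) \<in> r"
      then obtain h where xy: "x \<in> A" "y \<in> A" "h \<in> H" "y = (x*h) mod n" unfolding r_def by blast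
      obtain h' where h': "h' \<in> H" "(h*h') mod n = 1" using Hi[OF xy(3)] by blast
      have "(y*h') mod n = (x*(h*h')) mod n" using xy(4) by (simp add: mod_mult_left_eq mult.assoc)
      also have "\<dots> = (x*((h*h') mod n)) mod n" by (simp add: mod_mult_right_eq)
      also have "\<dots> = x" using h' xy(1) unfolding A_def by simp
      finally have "x = (y*h') mod n" by simp
      thus "(y,x) \<in> r" unfolding r_def using xy h' by blast
    qed
    show "trans r" unfolding trans_def
    proof (intro allI impI)
      fix x y z assume "(x,y) \<in> r" "(y,z) \<in> r"
      then obtain h1 h2 where xy: "x \<in> A" "y \<in> A" "z \<in> A" "h1 \<in> H" "y = (x*h1) mod n"
        "h2 \<in> H" "z = (y*h2) mod n" unfolding r_def by blast
      have "z = (x*(h1*h2)) mod n" using xy by (simp add: mod_mult_left_eq mult.assoc)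
      also have "\<dots> = (x*((h1*h2) mod n)) mod n" by (simp add: mod_mult_right_eq)
      finally have "z = (x*((h1*h2) mod n)) mod n" .
      thus "(x,z) \<in> r" unfolding r_def using xy Hm[OF xy(4) xy(6)] by blast
    qed
  qed
  have cls: "6 dvd card X" if "X \<in> A // r" for X
  proof -
    obtain x where x: "x \<in> A" "X = r `` {x}" using \<open>X \<in> A // r\<close> by (auto elim: quotientE)
    have X: "X = (\<lambda>h. (x*h) mod n) ` H" unfolding x(2) r_def using x(1) inA by auto
    have "inj_on (\<lambda>h. (x*h) mod n) H"
    proof
      fix h h' assume hh: "h \<in> H" "h' \<in> H" "(x*h) mod n = (x*h') mod n"
      obtain k where k: "k \<in> H" "(h'*k) mod n = 1" using Hi[OF hh(2)] by blast
      define m where "m = (h*k) mod n"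
      have mH: "m \<in> H" unfolding m_def using Hm hh k by blast
      have "(x*m) mod n = (x*h*k) mod n" unfolding m_def by (simp add: mod_mult_right_eq mult.assoc)
      also have "\<dots> = ((x*h) mod n * k) mod n" by (simp add: mod_mult_left_eq)
      also have "\<dots> = ((x*h') mod n * k) mod n" using hh(3) by simp
      also have "\<dots> = (x*((h'*k) mod n)) mod n" by (simp add: mod_mult_left_eq mod_mult_right_eq mult.assoc)
      also have "\<dots> = x" using k x(1) unfolding A_def by simp
      finally have xm: "(x*m) mod n = x mod n" using x(1) unfolding A_def by simp
      have m1: "m = 1"
      proof (rule ccontr)
        assume "m \<noteq> 1"
        hence cm: "coprime n (m - 1)" using frob_fix_unit[OF n1 fg H mH] by (simp add: coprime_commute)
        have "n dvd x*m - x" using xm by (simp add: mod_eq_dvd_iff)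
        hence "n dvd x*(m - 1)" by (simp add: algebra_simps)
        hence "n dvd x" using cm coprime_dvd_mult_left_iff by blast
        thus False using x(1) unfolding A_def using zdvd_not_zless by auto
      qed
      have "[h*k = h'*k] (mod n)" using m1 k(2) unfolding m_def by (simp add: cong_def)
      moreover have "coprime k n" using Hc[OF k(1)] .
      ultimately have "[h = h'] (mod n)" by (simp add: cong_mult_rcancel)
      thus "h = h'" using Hr[OF hh(1)] Hr[OF hh(2)] by (simp add: cong_def)
    qed
    hence "card X = card H" using X by (simp add: card_image)
    hence "card X = 6" using cH by simp
    thus ?thesis by simp
  qed
  have "6 dvd card A" by (rule equiv_imp_dvd_card[OF _ eq cls]) (simp add: A_def)
  moreover have "card A = nat (n - 1)" unfolding A_def by simp
  ultimately have "(6::nat) dvd nat (n - 1)" by simp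
  hence "int 6 dvd int (nat (n - 1))" by (simp only: int_dvd_int_iff)
  hence "6 dvd n - 1" using n1 by simp
  thus ?thesis by presburger
qed




lemma dvd_by: "X = k * Y \<Longrightarrow> (N::int) dvd Y \<Longrightarrow> N dvd X"
  by simp

lemma modeq: "X - Y = k * Z \<Longrightarrow> (N::int) dvd Z \<Longrightarrow> X mod N = Y mod N"
  by (simp add: mod_eq_dvd_iff)

lemma neq2:
  fixes N :: int
  assumes "coprime u N" "(x - y) - u = N*k" "N > 1"
  shows "x mod N \<noteq> y mod N"
proof
  assume "x mod N = y mod N"
  hence d: "N dvd x - y" by (simp add: mod_eq_dvd_iff)
  have "u = (x - y) - N*k" using assms(2) by linarith
  moreover have "N dvd (x - y) - N*k" using d by (rule dvd_diff) simp
  ultimately have "N dvd u" by simp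
  hence "is_unit N" using coprime_common_divisor[OF assms(1) _ dvd_refl] by blast
  hence "N dvd 1" by simp
  hence "N \<le> 1" by (rule zdvd_imp_le) simp
  thus False using assms(3) by simp
qed

lemma cop_mod:
  assumes "x mod N = y mod N" "coprime y N" "(N::int) \<noteq> 0" shows "coprime x N"
proof -
  have "coprime (y mod N) N" using assms(2,3) by simp
  hence "coprime (x mod N) N" using assms(1) by simp
  thus ?thesis using assms(3) by simp
qed

lemma cop_via: "X * Y - U = k * Z \<Longrightarrow> (N::int) dvd Z \<Longrightarrow> coprime U N \<Longrightarrow> coprime X N"
  by (rule coprime_from_prod[of N X Y U]) simp_all

locale frobset =
  fixes N a :: int
  assumes N7: "N \<ge> 7" and N6: "N mod 6 = 1" and h: "N dvd a^2 - a + 1"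
begin

lemma N1: "N > 1" using N7 by simp
lemma N0: "N \<noteq> 0" using N7 by simp

lemma c2: "coprime 2 N"
proof -
  define q where "q = N div 6"
  have q: "N = 6*q + 1" using mult_div_mod_eq[of 6 N] N6 unfolding q_def by linarith
  hence "2 * (-(3*q)) - 1 = (-1) * N" by simp
  thus ?thesis by (rule cop_via) simp_all
qed

lemma c3: "coprime 3 N"
proof -
  define q where "q = N div 6"
  have q: "N = 6*q + 1" using mult_div_mod_eq[of 6 N] N6 unfolding q_def by linarith
  hence "3 * (-(2*q)) - 1 = (-1) * N" by simp
  thus ?thesis by (rule cop_via) simp_all
qed

lemma ca: "coprime a N"
  apply (rule cop_via[of a "1 - a" 1 "-1" "a^2 - a + 1"])
  apply (simp add: algebra_simps power2_eq_square)
  apply (rule h)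
  by (simp add: c3)

lemma ca1: "coprime (a - 1) N"
  apply (rule cop_via[of "a - 1" "-a" 1 "-1" "a^2 - a + 1"])
  apply (simp add: algebra_simps power2_eq_square)
  apply (rule h)
  by (simp add: c3)

lemma cap1: "coprime (a + 1) N"
  apply (rule cop_via[of "a + 1" "2 - a" 3 "-1" "a^2 - a + 1"])
  apply (simp add: algebra_simps power2_eq_square)
  apply (rule h)
  by (simp add: c3)

lemma cam2: "coprime (a - 2) N"
  apply (rule cop_via[of "a - 2" "a + 1" "-3" 1 "a^2 - a + 1"])
  apply (simp add: algebra_simps power2_eq_square)
  apply (rule h)
  by (simp add: c3)

lemma c2a1: "coprime (2*a - 1) N"
  apply (rule cop_via[of "2*a - 1" "2*a - 1" "-3" 4 "a^2 - a + 1"])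
  apply (simp add: algebra_simps power2_eq_square)
  apply (rule h)
  by (simp add: c3)

lemma c2a: "coprime (2*a) N" by (simp only: coprime_mult_left_iff c2 ca simp_thms)
lemma c2am1: "coprime (2*(a-1)) N" by (simp only: coprime_mult_left_iff c2 ca1 simp_thms)
lemma c1ma: "coprime (1 - a) N" using ca1 coprime_minus_left_iff[of "a - 1" N] by simp
lemma c2ma: "coprime (2 - a) N" using cam2 coprime_minus_left_iff[of "a - 2" N] by simp
lemma cm1: "coprime (-1) N" by simp
lemma c1: "coprime 1 N" by simp

lemma six: "tl_6valent N a (a - 1) 1"
proof -
  have d1: "a mod N \<noteq> (a - 1) mod N" by (rule neq2[OF c1 _ N1, of _ _ 0]) simp
  have d2: "a mod N \<noteq> 1 mod N" by (rule neq2[OF ca1 _ N1, of _ _ 0]) simp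
  have d3: "a mod N \<noteq> (N - a) mod N" by (rule neq2[OF c2a _ N1, of _ _ "-1"]) simp
  have d4: "a mod N \<noteq> (N - (a - 1)) mod N" by (rule neq2[OF c2a1 _ N1, of _ _ "-1"]) simp
  have d5: "a mod N \<noteq> (N - 1) mod N" by (rule neq2[OF cap1 _ N1, of _ _ "-1"]) simp
  have d6: "(a - 1) mod N \<noteq> 1 mod N" by (rule neq2[OF cam2 _ N1, of _ _ 0]) simp
  have d7: "(a - 1) mod N \<noteq> (N - a) mod N" by (rule neq2[OF c2a1 _ N1, of _ _ "-1"]) simp
  have d8: "(a - 1) mod N \<noteq> (N - (a - 1)) mod N" by (rule neq2[OF c2am1 _ N1, of _ _ "-1"]) simp
  have d9: "(a - 1) mod N \<noteq> (N - 1) mod N" by (rule neq2[OF ca _ N1, of _ _ "-1"]) simp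
  have d10: "1 mod N \<noteq> (N - a) mod N" by (rule neq2[OF cap1 _ N1, of _ _ "-1"]) simp
  have d11: "1 mod N \<noteq> (N - (a - 1)) mod N" by (rule neq2[OF ca _ N1, of _ _ "-1"]) simp
  have d12: "1 mod N \<noteq> (N - 1) mod N" by (rule neq2[OF c2 _ N1, of _ _ "-1"]) simp
  have d13: "(N - a) mod N \<noteq> (N - (a - 1)) mod N" by (rule neq2[OF cm1 _ N1, of _ _ 0]) simp
  have d14: "(N - a) mod N \<noteq> (N - 1) mod N" by (rule neq2[OF c1ma _ N1, of _ _ 0]) simp
  have d15: "(N - (a - 1)) mod N \<noteq> (N - 1) mod N" by (rule neq2[OF c2ma _ N1, of _ _ 0]) simp
  show ?thesis unfolding tl_6valent_def distinct.simps list.set insert_iff empty_iff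
    using d1 d2 d3 d4 d5 d6 d7 d8 d9 d10 d11 d12 d13 d14 d15 by blast
qed

end




lemma cneg: "x = - y \<Longrightarrow> coprime y N \<Longrightarrow> coprime x (N::int)" by simp

lemma sdp_G: "g \<in> sdp_group n H \<Longrightarrow> \<exists>y m. g = sdp_act n y m \<and> y \<in> {0..<n} \<and> m \<in> H"
  unfolding sdp_group_def by blast

context frobset
begin

abbreviation "T \<equiv> tl_conn N a (a - 1) 1"

lemma p2: "a^2 mod N = (a - 1) mod N"
  by (rule modeq[OF _ h, of _ _ 1]) (simp add: eval_nat_numeral algebra_simps)
lemma p3: "a^3 mod N = (-1) mod N"
  by (rule modeq[OF _ h, of _ _ "a + 1"]) (simp add: eval_nat_numeral algebra_simps)
lemma p4: "a^4 mod N = (-a) mod N"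
  by (rule modeq[OF _ h, of _ _ "a^2 + a"]) (simp add: eval_nat_numeral algebra_simps)
lemma p5: "a^5 mod N = (-(a - 1)) mod N"
  by (rule modeq[OF _ h, of _ _ "a^3 + a^2 - 1"]) (simp add: eval_nat_numeral algebra_simps)
lemma p6: "a^6 mod N = 1"
proof -
  have "a^6 mod N = 1 mod N"
    by (rule modeq[OF _ h, of _ _ "a^4 + a^3 - a - 1"]) (simp add: eval_nat_numeral algebra_simps)
  thus ?thesis using N1 by simp
qed

lemma pow_red: "a^i mod N = a^(i mod 6) mod N"
proof -
  have "a^i = (a^6)^(i div 6) * a^(i mod 6)"
    by (metis div_mult_mod_eq power_add power_mult mult.commute)
  hence "a^i mod N = (((a^6)^(i div 6)) mod N * a^(i mod 6)) mod N" by (simp add: mod_mult_left_eq)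
  also have "((a^6)^(i div 6)) mod N = 1"
  proof -
    have "((a^6)^(i div 6)) mod N = ((a^6 mod N)^(i div 6)) mod N" by (simp add: power_mod)
    also have "\<dots> = 1" using p6 N1 by simp
    finally show ?thesis .
  qed
  finally show ?thesis by simp
qed

lemma T_pow: "x \<in> T \<longleftrightarrow> (\<exists>i. x = a^i mod N)"
proof
  assume "x \<in> T"
  hence "x = a mod N \<or> x = (-a) mod N \<or> x = (a - 1) mod N \<or> x = (- (a - 1)) mod N \<or> x = 1 mod N \<or> x = (-1) mod N"
    unfolding tl_conn_def by blast
  thus "\<exists>i. x = a^i mod N"
  proof (elim disjE)
    assume "x = a mod N" thus ?thesis by (intro exI[of _ 1]) simp
  next
    assume "x = (-a) mod N" thus ?thesis using p4 by (intro exI[of _ 4]) simp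
  next
    assume "x = (a - 1) mod N" thus ?thesis using p2 by (intro exI[of _ 2]) simp
  next
    assume "x = (- (a - 1)) mod N" thus ?thesis using p5 by (intro exI[of _ 5]) simp
  next
    assume "x = 1 mod N" thus ?thesis by (intro exI[of _ 0]) simp
  next
    assume "x = (-1) mod N" thus ?thesis using p3 by (intro exI[of _ 3]) simp
  qed
next
  assume "\<exists>i. x = a^i mod N"
  then obtain i where i: "x = a^(i mod 6) mod N" using pow_red by metis
  have "i mod 6 = 0 \<or> i mod 6 = 1 \<or> i mod 6 = 2 \<or> i mod 6 = 3 \<or> i mod 6 = 4 \<or> i mod 6 = 5" by presburger
  thus "x \<in> T"
  proof (elim disjE)
    assume "i mod 6 = 0" thus ?thesis using i unfolding tl_conn_def by simp
  next
    assume "i mod 6 = 1" thus ?thesis using i unfolding tl_conn_def by simp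
  next
    assume "i mod 6 = 2" thus ?thesis using i p2 unfolding tl_conn_def by simp
  next
    assume "i mod 6 = 3" thus ?thesis using i p3 unfolding tl_conn_def by simp
  next
    assume "i mod 6 = 4" thus ?thesis using i p4 unfolding tl_conn_def by simp
  next
    assume "i mod 6 = 5" thus ?thesis using i p5 unfolding tl_conn_def by simp
  qed
qed

lemma T_range: "x \<in> T \<Longrightarrow> x \<in> {0..<N}"
  using N1 unfolding tl_conn_def by auto

lemma T_cop: "x \<in> T \<Longrightarrow> coprime x N"
proof -
  assume "x \<in> T"
  then obtain i where i: "x = a^i mod N" using T_pow by blast
  have "coprime (a^i) N" using ca by simp
  thus ?thesis using i N0 by simp
qed

lemma T1: "1 \<in> T"
proof -
  have "(1::int) = a^0 mod N" using N1 by simp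
  thus ?thesis using T_pow by blast
qed

lemma T_mult: "x \<in> T \<Longrightarrow> y \<in> T \<Longrightarrow> (x * y) mod N \<in> T"
proof -
  assume "x \<in> T" "y \<in> T"
  then obtain i j where i: "x = a^i mod N" and j: "y = a^j mod N" using T_pow by meson
  have "(x * y) mod N = a^(i+j) mod N" unfolding i j by (simp add: mod_mult_eq power_add)
  thus ?thesis using T_pow by blast
qed

lemma T_inv: "x \<in> T \<Longrightarrow> \<exists>y\<in>T. (x * y) mod N = 1"
proof -
  assume "x \<in> T"
  then obtain i where i: "x = a^i mod N" using T_pow by blast
  define y where "y = a^(5*i) mod N"
  have yT: "y \<in> T" unfolding y_def using T_pow by blast
  have "(x * y) mod N = (a^i * a^(5*i)) mod N" unfolding i y_def by (simp add: mod_mult_eq)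
  also have "a^i * a^(5*i) = a^(i + 5*i)" by (simp only: power_add)
  finally have e1: "(x * y) mod N = a^(i + 5*i) mod N" .
  have e2: "a^(i + 5*i) mod N = a^((i + 5*i) mod 6) mod N" by (rule pow_red)
  have e3: "(i + 5*i) mod 6 = 0" by simp
  have "(x * y) mod N = a^0 mod N" by (simp only: e1 e2 e3)
  hence "(x * y) mod N = 1" using N1 by simp
  thus ?thesis using yT by blast
qed

lemma units: "units_subgroup N T"
  unfolding units_subgroup_def using T_range T_cop T1 T_mult T_inv by blast

lemma T_m1: "m \<in> T \<Longrightarrow> m \<noteq> 1 \<Longrightarrow> coprime (m - 1) N"
proof -
  assume mT: "m \<in> T" and m1: "m \<noteq> 1"
  have key: "coprime (m - 1) N" if "m = t mod N" "coprime (t - 1) N" for t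
  proof (rule cop_mod[OF _ that(2) N0])
    show "(m - 1) mod N = (t - 1) mod N" unfolding that(1) by (simp add: mod_diff_left_eq)
  qed
  from mT have "m = a mod N \<or> m = (-a) mod N \<or> m = (a - 1) mod N \<or> m = (- (a - 1)) mod N \<or> m = 1 mod N \<or> m = (-1) mod N"
    unfolding tl_conn_def by blast
  thus ?thesis
  proof (elim disjE)
    assume "m = a mod N" thus ?thesis using key ca1 by blast
  next
    assume "m = (-a) mod N"
    moreover have "coprime (-a - 1) N" by (rule cneg[OF _ cap1]) simp
    ultimately show ?thesis using key by blast
  next
    assume "m = (a - 1) mod N"
    moreover have "coprime (a - 1 - 1) N" using cam2 by simp
    ultimately show ?thesis using key by blast
  next
    assume "m = (- (a - 1)) mod N"
    moreover have "coprime (- (a - 1) - 1) N" by (rule cneg[OF _ ca]) simp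
    ultimately show ?thesis using key by blast
  next
    assume "m = 1 mod N" thus ?thesis using m1 N1 by simp
  next
    assume "m = (-1) mod N"
    moreover have "coprime (-1 - 1) N" by (rule cneg[OF _ c2]) simp
    ultimately show ?thesis using key by blast
  qed
qed

end




context frobset
begin

lemma sdp_bij:
  assumes mT: "m \<in> T" shows "bij_betw (sdp_act N y m) {0..<N} {0..<N}"
proof -
  have cm: "coprime m N" using T_cop[OF mT] .
  have inj: "inj_on (sdp_act N y m) {0..<N}"
  proof
    fix x x' assume x: "x \<in> {0..<N}" and x': "x' \<in> {0..<N}" and e: "sdp_act N y m x = sdp_act N y m x'"
    hence "[(x + y) * m = (x' + y) * m] (mod N)" by (simp add: sdp_act_def cong_def)
    hence "[x + y = x' + y] (mod N)" using cm by (simp add: cong_mult_rcancel)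
    hence "(x + y) mod N = (x' + y) mod N" by (simp add: cong_def)
    hence "N dvd x - x'" by (simp add: mod_eq_dvd_iff)
    hence "x mod N = x' mod N" by (simp add: mod_eq_dvd_iff)
    thus "x = x'" using x x' by simp
  qed
  have sub: "sdp_act N y m ` {0..<N} \<subseteq> {0..<N}" using N1 by (auto simp: sdp_act_def)
  have "sdp_act N y m ` {0..<N} = {0..<N}" by (rule endo_inj_surj[OF _ sub inj]) simp
  thus ?thesis using inj by (simp add: bij_betw_def)
qed

lemma frob_group: "frobenius_group {0..<N} (sdp_group N T)"
  unfolding frobenius_group_def
proof (intro conjI)
  show "\<forall>g\<in>sdp_group N T. bij_betw g {0..<N} {0..<N}"
  proof
    fix g assume "g \<in> sdp_group N T"
    then obtain y m where g: "g = sdp_act N y m" "m \<in> T" using sdp_G by blast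
    show "bij_betw g {0..<N} {0..<N}" unfolding g(1) by (rule sdp_bij[OF g(2)])
  qed
  show "\<forall>x\<in>{0..<N}. \<forall>z\<in>{0..<N}. \<exists>g\<in>sdp_group N T. g x = z"
  proof (intro ballI)
    fix x z assume x: "x \<in> {0..<N}" and z: "z \<in> {0..<N}"
    have gG: "sdp_act N ((z - x) mod N) 1 \<in> sdp_group N T" using N1 T1 by (intro sdp_mem) auto
    have "sdp_act N ((z - x) mod N) 1 x = (x + (z - x)) mod N" by (simp add: sdp_act_def mod_add_right_eq)
    also have "\<dots> = z" using z by simp
    finally show "\<exists>g\<in>sdp_group N T. g x = z" using gG by blast
  qed
  show "\<exists>g\<in>sdp_group N T. \<exists>x\<in>{0..<N}. g x = x \<and> (\<exists>z\<in>{0..<N}. g z \<noteq> z)"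
  proof -
    have aT: "a mod N \<in> T" by (simp add: tl_conn_def)
    have gG: "sdp_act N 0 (a mod N) \<in> sdp_group N T" using N1 aT by (intro sdp_mem) auto
    have g0: "sdp_act N 0 (a mod N) 0 = 0" by (simp add: sdp_act_def)
    have "a mod N \<noteq> 1 mod N" by (rule neq2[OF ca1 _ N1, of _ _ 0]) simp
    hence g1: "sdp_act N 0 (a mod N) 1 \<noteq> 1" using N1 by (simp add: sdp_act_def)
    show ?thesis using gG g0 g1 N1 by (intro bexI[of _ "sdp_act N 0 (a mod N)"] bexI[of _ 0]) auto
  qed
  show "\<forall>g\<in>sdp_group N T. (\<exists>x\<in>{0..<N}. \<exists>y\<in>{0..<N}. x \<noteq> y \<and> g x = x \<and> g y = y) \<longrightarrow> (\<forall>z\<in>{0..<N}. g z = z)"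
  proof (intro ballI impI)
    fix g z assume gG: "g \<in> sdp_group N T" and z: "z \<in> {0..<N}"
      and "\<exists>x\<in>{0..<N}. \<exists>y\<in>{0..<N}. x \<noteq> y \<and> g x = x \<and> g y = y"
    then obtain x1 x2 where x: "x1 \<in> {0..<N}" "x2 \<in> {0..<N}" "x1 \<noteq> x2" "g x1 = x1" "g x2 = x2" by blast
    obtain y m where g: "g = sdp_act N y m" "m \<in> T" using sdp_G[OF gG] by blast
    show "g z = z"
    proof (cases "m = 1")
      case True
      have "(x1 + y) mod N = x1 mod N" using x(1,4) unfolding g(1) True by (simp add: sdp_act_def)
      hence "N dvd y" by (simp add: mod_eq_dvd_iff)
      hence "(z + y) mod N = z mod N" by (simp add: mod_eq_dvd_iff)
      thus ?thesis using z unfolding g(1) True by (simp add: sdp_act_def)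
    next
      case False
      have cm: "coprime (m - 1) N" using T_m1[OF g(2) False] .
      have "((x1 + y) * m) mod N = x1 mod N" using x(1,4) unfolding g(1) by (simp add: sdp_act_def)
      hence d1: "N dvd (x1 + y) * m - x1" by (simp add: mod_eq_dvd_iff)
      have "((x2 + y) * m) mod N = x2 mod N" using x(2,5) unfolding g(1) by (simp add: sdp_act_def)
      hence d2: "N dvd (x2 + y) * m - x2" by (simp add: mod_eq_dvd_iff)
      have "N dvd ((x1 + y) * m - x1) - ((x2 + y) * m - x2)" using d1 d2 by (rule dvd_diff)
      moreover have "((x1 + y) * m - x1) - ((x2 + y) * m - x2) = (x1 - x2) * (m - 1)"
        by (simp add: algebra_simps)
      ultimately have "N dvd (x1 - x2) * (m - 1)" by simp
      moreover have "coprime N (m - 1)" using cm by (simp add: coprime_commute)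
      ultimately have "N dvd x1 - x2" using coprime_dvd_mult_left_iff by blast
      hence "x1 mod N = x2 mod N" by (simp add: mod_eq_dvd_iff)
      hence "x1 = x2" using x(1,2) by simp
      thus ?thesis using x(3) by simp
    qed
  qed
qed

lemma kernel: "frobenius_kernel {0..<N} (sdp_group N T) = zn_translations N"
proof
  show "frobenius_kernel {0..<N} (sdp_group N T) \<subseteq> zn_translations N"
  proof
    fix g assume "g \<in> frobenius_kernel {0..<N} (sdp_group N T)"
    hence gG: "g \<in> sdp_group N T" and idfp: "(\<forall>x\<in>{0..<N}. g x = x) \<or> (\<forall>x\<in>{0..<N}. g x \<noteq> x)"
      unfolding frobenius_kernel_def by blast+
    obtain y m where g: "g = sdp_act N y m" "y \<in> {0..<N}" "m \<in> T" using sdp_G[OF gG] by blast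
    have m1: "m = 1"
    proof (rule ccontr)
      assume mn: "m \<noteq> 1"
      have cm: "coprime (m - 1) N" using T_m1[OF g(3) mn] .
      obtain w where w: "[(m - 1) * w = 1] (mod N)" using cong_solve_coprime_int[OF cm] by blast
      have dw: "N dvd (m - 1) * w - 1" using w by (simp add: cong_iff_dvd_diff)
      define x0 where "x0 = (-(y*m*w)) mod N"
      have x0X: "x0 \<in> {0..<N}" unfolding x0_def using N1 by simp
      have "x0 mod N = (-(y*m*w)) mod N" unfolding x0_def by simp
      hence "N dvd x0 - (-(y*m*w))" by (simp only: mod_eq_dvd_iff)
      hence dx: "N dvd x0 + y*m*w" by simp
      have "(x0 + y) * m - x0 = (x0 + y*m*w) * (m - 1) - y*m*((m - 1) * w - 1)"
        by (simp add: algebra_simps)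
      moreover have "N dvd (x0 + y*m*w) * (m - 1) - y*m*((m - 1) * w - 1)"
        using dx dw by (intro dvd_diff) simp_all
      ultimately have "N dvd (x0 + y) * m - x0" by simp
      hence "((x0 + y) * m) mod N = x0 mod N" by (simp add: mod_eq_dvd_iff)
      hence gx0: "g x0 = x0" using x0X unfolding g(1) by (simp add: sdp_act_def)
      hence idt: "\<forall>x\<in>{0..<N}. g x = x" using idfp x0X by blast
      have "g 0 = 0" "g 1 = 1" using idt N1 by auto
      hence "(y * m) mod N = 0" "((1 + y) * m) mod N = 1" unfolding g(1) by (simp_all add: sdp_act_def)
      hence "N dvd y * m" "N dvd (1 + y) * m - 1" using N1
        by (simp_all add: mod_eq_0_iff_dvd mod_eq_dvd_iff[symmetric])
      hence "N dvd ((1 + y) * m - 1) - y * m" by (rule dvd_diff[rotated])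
      hence "N dvd m - 1" by (simp add: algebra_simps)
      hence "m mod N = 1 mod N" by (simp add: mod_eq_dvd_iff)
      hence "m = 1" using T_range[OF g(3)] N1 by simp
      thus False using mn by simp
    qed
    show "g \<in> zn_translations N" unfolding zn_translations_def using g m1 by blast
  qed
  show "zn_translations N \<subseteq> frobenius_kernel {0..<N} (sdp_group N T)"
  proof
    fix g assume "g \<in> zn_translations N"
    then obtain y where g: "g = sdp_act N y 1" "y \<in> {0..<N}" unfolding zn_translations_def by blast
    have gG: "g \<in> sdp_group N T" unfolding g(1) using g(2) T1 by (rule sdp_mem)
    have "(\<forall>x\<in>{0..<N}. g x = x) \<or> (\<forall>x\<in>{0..<N}. g x \<noteq> x)"
    proof (cases "y = 0")
      case True thus ?thesis unfolding g(1) by (simp add: sdp_act_def)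
    next
      case False
      have "g x \<noteq> x" if x: "x \<in> {0..<N}" for x
      proof
        assume "g x = x"
        hence "(x + y) mod N = x mod N" using x unfolding g(1) by (simp add: sdp_act_def)
        hence "N dvd y" by (simp add: mod_eq_dvd_iff)
        hence "y mod N = 0" by simp
        thus False using g(2) False by simp
      qed
      thus ?thesis by blast
    qed
    thus "g \<in> frobenius_kernel {0..<N} (sdp_group N T)" using gG unfolding frobenius_kernel_def by blast
  qed
qed

lemma Zn_gen_all: "Zn_gen N T = {0..<N}"
proof
  show "Zn_gen N T \<subseteq> {0..<N}" using Zn_gen_range N1 by auto
  have one: "1 \<in> Zn_gen N T"
  proof -
    have "1 mod N \<in> Zn_gen N T" using T1 by (rule Zn_gen.gen)
    thus ?thesis using N1 by simp
  qed
  have "\<forall>k::nat. int k < N \<longrightarrow> int k \<in> Zn_gen N T"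
  proof
    fix k :: nat show "int k < N \<longrightarrow> int k \<in> Zn_gen N T"
    proof (induction k)
      case 0 show ?case using Zn_gen.zero by simp
    next
      case (Suc k)
      show ?case
      proof
        assume k: "int (Suc k) < N"
        hence "int k \<in> Zn_gen N T" using Suc.IH by simp
        hence "(int k + 1) mod N \<in> Zn_gen N T" using one by (rule Zn_gen.add)
        moreover have "(int k + 1) mod N = int (Suc k)" using k by simp
        ultimately show "int (Suc k) \<in> Zn_gen N T" by simp
      qed
    qed
  qed
  thus "{0..<N} \<subseteq> Zn_gen N T" by (auto, metis int_nat_eq nat_less_iff)
qed

lemma first_kind: "first_kind_frobenius_conn N T T"
proof -
  have "{(1 * h) mod N | h. h \<in> T} = T"
  proof
    show "{(1 * h) mod N | h. h \<in> T} \<subseteq> T" using T_range by auto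
    show "T \<subseteq> {(1 * h) mod N | h. h \<in> T}"
    proof
      fix x assume "x \<in> T"
      moreover hence "x = (1 * x) mod N" using T_range by simp
      ultimately show "x \<in> {(1 * h) mod N | h. h \<in> T}" by blast
    qed
  qed
  moreover have "card T = 6" using card_tl_conn[OF six] .
  ultimately show ?thesis unfolding first_kind_frobenius_conn_def using N1 Zn_gen_all
    by (intro bexI[of _ 1]) auto
qed

lemma frob_circ: "frobenius_circulant N a (a - 1) 1"
  unfolding frobenius_circulant_def using N7 six units frob_group kernel first_kind by blast

end




lemma find_a:
  fixes c d N :: int
  assumes g: "gcd c d = 1" and N: "ej_norm (c,d) = N" "N > 0"
  shows "\<exists>a. N dvd c + d*a \<and> N dvd a^2 - a + 1"
proof -
  have cd: "coprime d c" using g by (simp add: coprime_iff_gcd_eq_1 gcd.commute)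
  have dN: "coprime d N"
  proof (rule coprimeI)
    fix q assume q: "q dvd d" "q dvd N"
    have "c^2 = N - c*d - d^2" using N(1) by (simp add: ej_norm_def)
    moreover have "q dvd N - c*d - d^2" using q by (simp add: power2_eq_square)
    ultimately have "q dvd c^2" by simp
    moreover have "coprime d (c^2)" using cd by simp
    ultimately show "is_unit q" using q(1) coprime_common_divisor by blast
  qed
  obtain w where w: "[d * w = 1] (mod N)" using cong_solve_coprime_int[OF dN] by blast
  have dw: "N dvd d*w - 1" using w by (simp add: cong_iff_dvd_diff)
  define a where "a = - c * w"
  have "c + d*a = (-c) * (d*w - 1)" unfolding a_def by (simp add: algebra_simps)
  hence h1: "N dvd c + d*a" using dw by simp
  have "d^2*(a^2 - a + 1) = (c^2 + c*d + d^2) + (d*w - 1)*(c^2*(d*w + 1) + c*d)"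
    unfolding a_def by (simp add: algebra_simps power2_eq_square)
  moreover have "N dvd (c^2 + c*d + d^2)" using N(1) by (simp add: ej_norm_def)
  moreover have "N dvd (d*w - 1)*(c^2*(d*w + 1) + c*d)" using dw by simp
  ultimately have "N dvd d^2*(a^2 - a + 1)" by simp
  moreover have "coprime N (d^2)" using dN by (simp add: coprime_commute)
  ultimately have "N dvd a^2 - a + 1" using coprime_dvd_mult_right_iff by blast
  thus ?thesis using h1 by blast
qed

lemma ident_d:
  fixes c d s n a :: int
  shows "c^2 + c*(s*n + c*(a-1)) + (s*n + c*(a-1))^2 = c^2*(a^2-a+1) + (2*a-1)*s*c*n + s^2*n^2"
  by (simp add: algebra_simps power2_eq_square)

lemma part_a:
  fixes n a :: int
  assumes n7: "n \<ge> 7" and n6: "n mod 6 = 1" and cg: "[a^2 - a + 1 = 0] (mod n)"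
  shows "\<exists>c d. gcd c d = 1 \<and> graph_iso (TL n a (a - 1) 1) (EJ (c, d)) \<and>
             (let k = (a^2 - a + 1) div n in
              \<exists>m r s.
                (c = r*n + m \<and> d = s*n - m*a \<and>
                   k*m^2 - ((a - 2)*r + (2*a - 1)*s)*m + (r^2 + r*s + s^2)*n = 1) \<or>
                (c = r*n + m \<and> d = s*n + m*(a - 1) \<and>
                   k*m^2 + ((a + 1)*r + (2*a - 1)*s)*m + (r^2 + r*s + s^2)*n = 1) \<or>
                (c = r*n + m*a \<and> d = s*n - m*(a - 1) \<and>
                   k*m^2 + ((a + 1)*r - (a - 2)*s)*m + (r^2 + r*s + s^2)*n = 1))"
proof -
  have h: "n dvd a^2 - a + 1" using cg by (simp add: cong_0_iff)
  interpret fs: frobset n a using n7 n6 h by unfold_locales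
  have n0: "n > 0" using n7 by simp
  have odd: "odd n" using fs.c2 by simp
  obtain c d where cd: "ej_norm (c,d) = n" "n dvd c + d*a"
    using exists_rep[OF n0 odd fs.c3 h] by blast
  have g: "gcd c d = 1" by (rule gcd_one[OF cd(1) n0 cd(2) h])
  have iso: "graph_iso (TL n a (a - 1) 1) (EJ (c, d))" by (rule iso_TL_EJ[OF cd(1) n0 cd(2) h])
  define k where "k = (a^2 - a + 1) div n"
  have kn: "a^2 - a + 1 = k*n" unfolding k_def using h by simp
  have "d - c*(a-1) = d*(a^2 - a + 1) - (a-1)*(c + d*a)" by (simp add: algebra_simps power2_eq_square)
  hence "n dvd d - c*(a-1)" using h cd(2) by simp
  then obtain s where s: "d - c*(a-1) = n*s" by blast
  have ds: "d = s*n + c*(a-1)" using s by (simp add: algebra_simps)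
  have "n = c^2 + c*d + d^2" using cd(1) by (simp add: ej_norm_def)
  also have "\<dots> = c^2*(a^2-a+1) + (2*a-1)*s*c*n + s^2*n^2" unfolding ds by (rule ident_d)
  also have "\<dots> = n * (k*c^2 + (2*a-1)*s*c + s^2*n)" unfolding kn by (simp add: algebra_simps power2_eq_square)
  finally have "n * 1 = n * (k*c^2 + (2*a-1)*s*c + s^2*n)" by simp
  hence eq: "k*c^2 + (2*a-1)*s*c + s^2*n = 1" using n0 by simp
  have "c = 0*n + c \<and> d = s*n + c*(a - 1) \<and>
        k*c^2 + ((a + 1)*0 + (2*a - 1)*s)*c + (0^2 + 0*s + s^2)*n = 1"
    using ds eq by (simp add: algebra_simps)
  hence "\<exists>m r s.
                (c = r*n + m \<and> d = s*n - m*a \<and>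
                   k*m^2 - ((a - 2)*r + (2*a - 1)*s)*m + (r^2 + r*s + s^2)*n = 1) \<or>
                (c = r*n + m \<and> d = s*n + m*(a - 1) \<and>
                   k*m^2 + ((a + 1)*r + (2*a - 1)*s)*m + (r^2 + r*s + s^2)*n = 1) \<or>
                (c = r*n + m*a \<and> d = s*n - m*(a - 1) \<and>
                   k*m^2 + ((a + 1)*r - (a - 2)*s)*m + (r^2 + r*s + s^2)*n = 1)"
    by blast
  note ex = this
  show ?thesis unfolding Let_def
    apply (rule exI[of _ c], rule exI[of _ d])
    apply (intro conjI)
      apply (rule g)
     apply (rule iso)
    using ex unfolding k_def .
qed

lemma part_b:
  fixes c d :: int
  assumes N7: "ej_norm (c, d) \<ge> 7" and g: "gcd c d = 1"
  shows "(\<exists>n a b e. frobenius_circulant n a b e \<and> graph_iso (EJ (c, d)) (TL n a b e)) \<longleftrightarrow>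
         ej_norm (c, d) mod 6 = 1"
proof -
  define N where "N = ej_norm (c,d)"
  have N0: "N > 0" using N7 unfolding N_def by simp
  obtain a0 where a0: "N dvd c + d*a0" "N dvd a0^2 - a0 + 1" using find_a[OF g N_def[symmetric] N0] by blast
  have iso1: "graph_iso (TL N a0 (a0 - 1) 1) (EJ (c, d))" by (rule iso_TL_EJ[OF N_def[symmetric] N0 a0])
  show ?thesis
  proof
    assume "\<exists>n a b e. frobenius_circulant n a b e \<and> graph_iso (EJ (c, d)) (TL n a b e)"
    then obtain n a b e where fc: "frobenius_circulant n a b e" and iso2: "graph_iso (EJ (c, d)) (TL n a b e)" by blast
    obtain f where f: "bij_betw f (fst (TL N a0 (a0 - 1) 1)) (fst (EJ (c, d)))"
      using iso1 unfolding graph_iso_def by blast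
    obtain f2 where f2: "bij_betw f2 (fst (EJ (c, d))) (fst (TL n a b e))"
      using iso2 unfolding graph_iso_def by blast
    have "card (fst (TL N a0 (a0 - 1) 1)) = card (fst (EJ (c, d)))" using f by (rule bij_betw_same_card)
    also have "\<dots> = card (fst (TL n a b e))" using f2 by (rule bij_betw_same_card)
    finally have "card {0..<N} = card {0..<n}" by (simp add: TL_def cay_Zn_def)
    hence "nat N = nat n" by simp
    moreover have "n \<ge> 7" using fc unfolding frobenius_circulant_def by blast
    ultimately have "N = n" using N0 by simp
    thus "ej_norm (c, d) mod 6 = 1" using frob_mod6[OF fc] unfolding N_def by simp
  next
    assume "ej_norm (c, d) mod 6 = 1"
    hence N6: "N mod 6 = 1" unfolding N_def .
    interpret fs: frobset N a0 using N7 N6 a0(2) unfolding N_def by unfold_locales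
    have "frobenius_circulant N a0 (a0 - 1) 1" by (rule fs.frob_circ)
    moreover have "graph_iso (EJ (c, d)) (TL N a0 (a0 - 1) 1)" by (rule graph_iso_sym[OF iso1])
    ultimately show "\<exists>n a b e. frobenius_circulant n a b e \<and> graph_iso (EJ (c, d)) (TL n a b e)" by blast
  qed
qed


theorem theorem3p2:
  shows "(\<forall>(n::int) (a::int). n \<ge> 7 \<and> frobenius_circulant n a (a - 1) 1 \<and> n mod 6 = 1 \<and>
            [a^2 - a + 1 = 0] (mod n) \<longrightarrow>
          (\<exists>c d. gcd c d = 1 \<and> graph_iso (TL n a (a - 1) 1) (EJ (c, d)) \<and>
             (let k = (a^2 - a + 1) div n in
              \<exists>m r s.
                (c = r*n + m \<and> d = s*n - m*a \<and>
                   k*m^2 - ((a - 2)*r + (2*a - 1)*s)*m + (r^2 + r*s + s^2)*n = 1) \<or>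
                (c = r*n + m \<and> d = s*n + m*(a - 1) \<and>
                   k*m^2 + ((a + 1)*r + (2*a - 1)*s)*m + (r^2 + r*s + s^2)*n = 1) \<or>
                (c = r*n + m*a \<and> d = s*n - m*(a - 1) \<and>
                   k*m^2 + ((a + 1)*r - (a - 2)*s)*m + (r^2 + r*s + s^2)*n = 1))))
     \<and>
     (\<forall>c d::int. ej_norm (c, d) \<ge> 7 \<and> gcd c d = 1 \<longrightarrow>
        ((\<exists>n a b e. frobenius_circulant n a b e \<and> graph_iso (EJ (c, d)) (TL n a b e)) \<longleftrightarrow>
         ej_norm (c, d) mod 6 = 1))"
proof (rule conjI)
  show "\<forall>(n::int) (a::int). n \<ge> 7 \<and> frobenius_circulant n a (a - 1) 1 \<and> n mod 6 = 1 \<and>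
            [a^2 - a + 1 = 0] (mod n) \<longrightarrow>
          (\<exists>c d. gcd c d = 1 \<and> graph_iso (TL n a (a - 1) 1) (EJ (c, d)) \<and>
             (let k = (a^2 - a + 1) div n in
              \<exists>m r s.
                (c = r*n + m \<and> d = s*n - m*a \<and>
                   k*m^2 - ((a - 2)*r + (2*a - 1)*s)*m + (r^2 + r*s + s^2)*n = 1) \<or>
                (c = r*n + m \<and> d = s*n + m*(a - 1) \<and>
                   k*m^2 + ((a + 1)*r + (2*a - 1)*s)*m + (r^2 + r*s + s^2)*n = 1) \<or>
                (c = r*n + m*a \<and> d = s*n - m*(a - 1) \<and>
                   k*m^2 + ((a + 1)*r - (a - 2)*s)*m + (r^2 + r*s + s^2)*n = 1)))"
    apply (intro allI impI)
    apply (elim conjE)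
    apply (rule part_a)
    by assumption+
  show "\<forall>c d::int. ej_norm (c, d) \<ge> 7 \<and> gcd c d = 1 \<longrightarrow>
        ((\<exists>n a b e. frobenius_circulant n a b e \<and> graph_iso (EJ (c, d)) (TL n a b e)) \<longleftrightarrow>
         ej_norm (c, d) mod 6 = 1)"
    apply (intro allI impI)
    apply (elim conjE)
    apply (rule part_b)
    by assumption+
qed

end
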